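(* Let $\mathcal G$ be a core network with multiple input nodes $\iota_1,\dots,\iota_n$ ($n\ge2$) and output node $o$. If $B_s$ is an irreducible structural homeostasis block of $\langle H\rangle$, so that $\det(B_s)$ is an irreducible factor of $\det\langle H\rangle$, then $\mathcal G$ has adjacent absolutely super-simple nodes $\rho_k,\rho_{k+1}$ such that $\det(B_s)=\det\big(H(\mathcal L'(\rho_k,\rho_{k+1}))\big)$.
   Context: Node $b$ is downstream from $a$ (and $a$ upstream from $b$) if there is a directed path from $a$ to $b$. Core network: every node upstream from $o$ and downstream from at least one input. Simple path: visits each node at most once; $\iota_mo$-simple path: simple path from $\iota_m$ to $o$. A node is $\iota_m$-simple if on some $\iota_mo$-simple path, $\iota_m$-appendage if downstream from $\iota_m$ but not $\iota_m$-simple; absolutely simple/appendage if so for all $m$. Absolutely super-simple: on every $\iota_mo$-simple path for every $m$; these are ordered $\rho_1>\cdots>\rho_p>o$ ($b$ after $a$ on every such path), adjacent = consecutive. $\mathcal L(\rho_k,\rho_{k+1})$: absolutely simple nodes $\rho$ such that for some $m$ some $\iota_mo$-simple path visits $\rho_k,\rho,\rho_{k+1}$ in that order. For an $\iota_mo$-simple path $S$, $CS$ is the subnetwork of nodes of $\mathcal G$ not on $S$ with all arrows between them; nodes are $CS$-path equivalent if joined by directed paths inside $CS$ in both directions. $\mathcal L'(\rho_k,\rho_{k+1})$: nodes of $\mathcal L(\rho_k,\rho_{k+1})$ plus all absolutely appendage nodes $CS_m$-path equivalent to nodes of $\mathcal L(\rho_k,\rho_{k+1})$ for some $m$ and some $\iota_mo$-simple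 path $S_m$, with arrows of $\mathcal G$ among them; it is regarded as an input-output network with input node $\rho_k$ and output node $\rho_{k+1}$. An admissible system has variables $x_j$ per node, $\dot x_{\iota_m}=f_{\iota_m}(X,\mathcal I)$, $\dot x_j=f_j(X)$ otherwise, $f_{j,x_\ell}\equiv0$ unless there is an arrow $\ell\to j$ (all nodes self-coupled), $f_{\iota_m,\mathcal I}\neq0$; these entries are independent indeterminates. For a subnetwork $\mathcal K$ with input node $a$ and output node $b$, its homeostasis matrix $H(\mathcal K)$ is $(f_{j,x_\ell})_{j,\ell\in\mathcal K}$ with the row of $a$ and the column of $b$ deleted. $\langle H\rangle$ is the Jacobian over all nodes of $\mathcal G$ (output last) with last column replaced by the column with $-f_{\iota_m,\mathcal I}$ in row $\iota_m$ and $0$ elsewhere. By Frobenius–König theory, for suitable permutation matrices $P,Q$, $P\langle H\rangle Q$ is block upper triangular with square fully indecomposable diagonal blocks (irreducible homeostasis blocks, with irreducible determinants). A diagonal block of order $k$ containing no $f_{\iota_m,\mathcal I}$ and exactly $k-1$ self-coupling entries $f_{\ell,x_\ell}$ is a structural homeostasis block. *)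

theory Defs
  imports Main "Jordan_Normal_Form.Determinant"
begin

text \<open>Networks: finite node set V, arrows E (pair (a,b) means a -> b), input set Ins, output out.\<close>

definition simple_path :: "('v \<times> 'v) set \<Rightarrow> 'v \<Rightarrow> 'v \<Rightarrow> 'v list \<Rightarrow> bool" where
  "simple_path E a b p \<longleftrightarrow> p \<noteq> [] \<and> hd p = a \<and> last p = b \<and> distinct p \<and>
     (\<forall>i. Suc i < length p \<longrightarrow> (p ! i, p ! Suc i) \<in> E)"

definition core_network :: "'v set \<Rightarrow> ('v \<times> 'v) set \<Rightarrow> 'v set \<Rightarrow> 'v \<Rightarrow> bool" where
  "core_network V E Ins out \<longleftrightarrow> finite V \<and> E \<subseteq> V \<times> V \<and> Ins \<subseteq> V \<and> out \<in> V \<and> out \<notin> Ins \<and>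
     (\<forall>v\<in>V. (v, out) \<in> E\<^sup>* \<and> (\<exists>i\<in>Ins. (i, v) \<in> E\<^sup>*))"

definition simple_node :: "('v \<times> 'v) set \<Rightarrow> 'v \<Rightarrow> 'v \<Rightarrow> 'v \<Rightarrow> bool" where
  "simple_node E i out v \<longleftrightarrow> (\<exists>p. simple_path E i out p \<and> v \<in> set p)"

definition appendage_node :: "('v \<times> 'v) set \<Rightarrow> 'v \<Rightarrow> 'v \<Rightarrow> 'v \<Rightarrow> bool" where
  "appendage_node E i out v \<longleftrightarrow> (i, v) \<in> E\<^sup>* \<and> \<not> simple_node E i out v"

definition abs_simple :: "('v \<times> 'v) set \<Rightarrow> 'v set \<Rightarrow> 'v \<Rightarrow> 'v \<Rightarrow> bool" where
  "abs_simple E Ins out v \<longleftrightarrow> (\<forall>i\<in>Ins. simple_node E i out v)"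

definition abs_appendage :: "('v \<times> 'v) set \<Rightarrow> 'v set \<Rightarrow> 'v \<Rightarrow> 'v \<Rightarrow> bool" where
  "abs_appendage E Ins out v \<longleftrightarrow> (\<forall>i\<in>Ins. appendage_node E i out v)"

definition abs_super_simple :: "('v \<times> 'v) set \<Rightarrow> 'v set \<Rightarrow> 'v \<Rightarrow> 'v \<Rightarrow> bool" where
  "abs_super_simple E Ins out v \<longleftrightarrow> (\<forall>i\<in>Ins. \<forall>p. simple_path E i out p \<longrightarrow> v \<in> set p)"

definition before_on :: "'v list \<Rightarrow> 'v \<Rightarrow> 'v \<Rightarrow> bool" where
  "before_on p a b \<longleftrightarrow> (\<exists>x y. x < y \<and> y < length p \<and> p ! x = a \<and> p ! y = b)"

definition adjacent_super_simple :: "('v \<times> 'v) set \<Rightarrow> 'v set \<Rightarrow> 'v \<Rightarrow> 'v \<Rightarrow> 'v \<Rightarrow> bool" where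
  "adjacent_super_simple E Ins out a b \<longleftrightarrow>
     abs_super_simple E Ins out a \<and> abs_super_simple E Ins out b \<and> a \<noteq> b \<and>
     (\<forall>i\<in>Ins. \<forall>p. simple_path E i out p \<longrightarrow> before_on p a b) \<and>
     \<not> (\<exists>c. abs_super_simple E Ins out c \<and> c \<noteq> a \<and> c \<noteq> b \<and>
          (\<exists>i\<in>Ins. \<exists>p. simple_path E i out p \<and> before_on p a c \<and> before_on p c b))"

text \<open>The set L(a,b); "in that order" read non-strictly, so a and b belong to L(a,b).\<close>
definition L_set :: "'v set \<Rightarrow> ('v \<times> 'v) set \<Rightarrow> 'v set \<Rightarrow> 'v \<Rightarrow> 'v \<Rightarrow> 'v \<Rightarrow> 'v set" where
  "L_set V E Ins out a b = {v \<in> V. abs_simple E Ins out v \<and>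
     (\<exists>i\<in>Ins. \<exists>p. simple_path E i out p \<and>
        (\<exists>x y z. x \<le> y \<and> y \<le> z \<and> z < length p \<and> p ! x = a \<and> p ! y = v \<and> p ! z = b))}"

definition cs_equiv :: "'v set \<Rightarrow> ('v \<times> 'v) set \<Rightarrow> 'v list \<Rightarrow> 'v \<Rightarrow> 'v \<Rightarrow> bool" where
  "cs_equiv V E S u v \<longleftrightarrow> u \<in> V - set S \<and> v \<in> V - set S \<and>
     (u, v) \<in> (E \<inter> ((V - set S) \<times> (V - set S)))\<^sup>* \<and>
     (v, u) \<in> (E \<inter> ((V - set S) \<times> (V - set S)))\<^sup>*"

definition L'_set :: "'v set \<Rightarrow> ('v \<times> 'v) set \<Rightarrow> 'v set \<Rightarrow> 'v \<Rightarrow> 'v \<Rightarrow> 'v \<Rightarrow> 'v set" where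
  "L'_set V E Ins out a b = L_set V E Ins out a b \<union>
     {v \<in> V. abs_appendage E Ins out v \<and>
        (\<exists>i\<in>Ins. \<exists>S. simple_path E i out S \<and> (\<exists>u\<in>L_set V E Ins out a b. cs_equiv V E S u v))}"

text \<open>Generic Jacobian of an admissible system: the independent indeterminates f_{j,x_l}
  are evaluated at arbitrary real values A j l (polynomial identities over the reals are
  equivalent to identities of the evaluation functions).\<close>
definition jac :: "('v \<times> 'v) set \<Rightarrow> ('v \<Rightarrow> 'v \<Rightarrow> real) \<Rightarrow> 'v \<Rightarrow> 'v \<Rightarrow> real" where
  "jac E A j l = (if j = l \<or> (l, j) \<in> E then A j l else 0)"

text \<open>The matrix <H>: Jacobian with the output column replaced by (-f_{i,I}) at input rows;
  c i is the value of the indeterminate f_{i,I}.\<close>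
definition hH :: "('v \<times> 'v) set \<Rightarrow> 'v set \<Rightarrow> 'v \<Rightarrow> ('v \<Rightarrow> 'v \<Rightarrow> real) \<Rightarrow> ('v \<Rightarrow> real) \<Rightarrow> 'v \<Rightarrow> 'v \<Rightarrow> real" where
  "hH E Ins out A c j l = (if l = out then (if j \<in> Ins then - c j else 0) else jac E A j l)"

text \<open>Structural non-zero pattern of <H> (entry is a non-zero polynomial)\<close>
definition hH_nz :: "('v \<times> 'v) set \<Rightarrow> 'v set \<Rightarrow> 'v \<Rightarrow> 'v \<Rightarrow> 'v \<Rightarrow> bool" where
  "hH_nz E Ins out j l = (if l = out then j \<in> Ins else j = l \<or> (l, j) \<in> E)"

definition fully_indecomposable :: "('v \<Rightarrow> 'v \<Rightarrow> bool) \<Rightarrow> 'v set \<Rightarrow> 'v set \<Rightarrow> bool" where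
  "fully_indecomposable Z R C \<longleftrightarrow> card R = card C \<and> R \<noteq> {} \<and>
     (\<forall>S T. S \<subseteq> R \<longrightarrow> T \<subseteq> C \<longrightarrow> S \<noteq> {} \<longrightarrow> T \<noteq> {} \<longrightarrow> card R \<le> card S + card T \<longrightarrow>
        (\<exists>j\<in>S. \<exists>l\<in>T. Z j l))"

text \<open>Frobenius-Koenig normal form P<H>Q: rows and columns of V are distributed into q blocks
  (rb j = block of row j, cb l = block of column l); diagonal blocks square and fully
  indecomposable, all entries below the block diagonal structurally zero.\<close>
definition fk_decomposition :: "'v set \<Rightarrow> ('v \<Rightarrow> 'v \<Rightarrow> bool) \<Rightarrow> nat \<Rightarrow> ('v \<Rightarrow> nat) \<Rightarrow> ('v \<Rightarrow> nat) \<Rightarrow> bool" where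
  "fk_decomposition V Z q rb cb \<longleftrightarrow>
     (\<forall>v\<in>V. rb v < q \<and> cb v < q) \<and>
     (\<forall>i<q. fully_indecomposable Z {v \<in> V. rb v = i} {v \<in> V. cb v = i}) \<and>
     (\<forall>j\<in>V. \<forall>l\<in>V. cb l < rb j \<longrightarrow> \<not> Z j l)"

text \<open>Structural homeostasis block: no f_{i,I} entry, exactly (order - 1) self-coupling entries.\<close>
definition structural_block :: "'v set \<Rightarrow> 'v \<Rightarrow> 'v set \<Rightarrow> 'v set \<Rightarrow> bool" where
  "structural_block Ins out R C \<longleftrightarrow> \<not> (out \<in> C \<and> (\<exists>j\<in>R. j \<in> Ins)) \<and>
     card {l \<in> R \<inter> C. l \<noteq> out} = card R - 1"

text \<open>Determinant of the submatrix with rows R and columns C (some fixed orderings;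
  determined up to sign).\<close>
definition detRC :: "'v::linorder set \<Rightarrow> 'v set \<Rightarrow> ('v \<Rightarrow> 'v \<Rightarrow> real) \<Rightarrow> real" where
  "detRC R C M = det (mat (card R) (card R)
     (\<lambda>(i, j). M (sorted_list_of_set R ! i) (sorted_list_of_set C ! j)))"

end

theory Submission
  imports Defs
begin

lemma sp_alt: "simple_path E a b p \<longleftrightarrow> p \<noteq> [] \<and> hd p = a \<and> last p = b \<and> distinct p \<and>
   successively (\<lambda>x y. (x,y) \<in> E) p"
  unfolding simple_path_def successively_conv_nth by blast

lemma last_take': "0 < n \<Longrightarrow> n \<le> length xs \<Longrightarrow> last (take n xs) = xs ! (n - 1)"
proof -
  assume a: "0 < n" "n \<le> length xs"
  then have "take n xs \<noteq> []" by auto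
  then have "last (take n xs) = take n xs ! (length (take n xs) - 1)" by (rule last_conv_nth)
  then show ?thesis using a by (simp add: min_def)
qed

lemma successively_take: "successively P xs \<Longrightarrow> successively P (take n xs)"
  by (metis append_take_drop_id successively_append_iff)

lemma successively_drop: "successively P xs \<Longrightarrow> successively P (drop n xs)"
  by (metis append_take_drop_id successively_append_iff)

lemma rtrancl_simple_path:
  assumes "(a,b) \<in> (E \<inter> W\<times>W)\<^sup>*" "a \<in> W"
  shows "\<exists>p. simple_path E a b p \<and> set p \<subseteq> W"
  using assms(1)
proof (induction rule: rtrancl_induct)
  case base
  then show ?case using assms(2) by (auto simp: sp_alt intro!: exI[of _ "[a]"])
next
  case (step y z)
  then obtain p where p: "simple_path E a y p" "set p \<subseteq> W" by blast
  show ?case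
  proof (cases "z \<in> set p")
    case True
    obtain k where k: "k < length p" "p ! k = z" using True by (auto simp: in_set_conv_nth)
    have "simple_path E a z (take (Suc k) p)"
      using p k unfolding sp_alt
      by (auto simp: hd_take last_take' successively_take distinct_take)
    then show ?thesis using p(2) by (meson order_trans set_take_subset)
  next
    case False
    have "simple_path E a z (p @ [z])"
      using p False step.hyps(2) unfolding sp_alt by (auto simp: successively_append_iff)
    then show ?thesis using p(2) step.hyps(2) by (intro exI[of _ "p @ [z]"]) auto
  qed
qed

lemma simple_path_reach:
  assumes "simple_path E a b p" "t \<le> t'" "t' < length p"
  shows "(p ! t, p ! t') \<in> E\<^sup>*"
  using assms(2,3)
proof (induction t')
  case 0 then show ?case by simp
next
  case (Suc t')
  show ?case
  proof (cases "t = Suc t'")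
    case True then show ?thesis by simp
  next
    case False
    then have "(p ! t, p ! t') \<in> E\<^sup>*" using Suc by auto
    moreover have "(p ! t', p ! Suc t') \<in> E" using assms(1) Suc.prems unfolding simple_path_def by auto
    ultimately show ?thesis by simp
  qed
qed

lemma simple_path_reach_from:
  assumes "simple_path E a b p" "x \<in> set p"
  shows "(a, x) \<in> E\<^sup>*" "(x, b) \<in> E\<^sup>*"
proof -
  obtain t where t: "t < length p" "p ! t = x" using assms(2) by (auto simp: in_set_conv_nth)
  have a: "a = p ! 0" "b = p ! (length p - 1)" using assms(1) unfolding sp_alt
    by (auto simp: hd_conv_nth last_conv_nth)
  show "(a, x) \<in> E\<^sup>*" using simple_path_reach[OF assms(1), of 0 t] t a by auto
  show "(x, b) \<in> E\<^sup>*" using simple_path_reach[OF assms(1), of t "length p - 1"] t a by auto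
qed

lemma simple_path_seg:
  assumes "simple_path E a b p" "u \<le> w" "w < length p"
  shows "simple_path E (p ! u) (p ! w) (drop u (take (Suc w) p))"
  using assms unfolding sp_alt
  by (auto simp: hd_drop_conv_nth successively_take successively_drop last_take' distinct_take distinct_drop min_def)

lemma simple_path_splice:
  assumes "simple_path E a b p" "u \<le> w" "w < length p"
    and "simple_path E (p ! u) (p ! w) Q"
    and "set Q \<inter> set (take u p) = {}" "set Q \<inter> set (drop (Suc w) p) = {}"
  shows "simple_path E a b (take u p @ Q @ drop (Suc w) p)"
proof -
  have p: "p \<noteq> []" "hd p = a" "last p = b" "distinct p" "successively (\<lambda>x y. (x,y) \<in> E) p"
    using assms(1) unfolding sp_alt by auto
  have Q: "Q \<noteq> []" "hd Q = p ! u" "last Q = p ! w" "distinct Q" "successively (\<lambda>x y. (x,y) \<in> E) Q"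
    using assms(4) unfolding sp_alt by auto
  have edge: "(p ! i, p ! Suc i) \<in> E" if "Suc i < length p" for i
    using assms(1) that unfolding simple_path_def by auto
  have hd: "hd (take u p @ Q @ drop (Suc w) p) = a"
  proof (cases "u = 0")
    case True then show ?thesis using Q p by (simp add: hd_conv_nth[symmetric])
  next
    case False then show ?thesis using p assms(3) Q(1) by simp
  qed
  have lst: "last (take u p @ Q @ drop (Suc w) p) = b"
  proof (cases "Suc w = length p")
    case True
    then have "drop (Suc w) p = []" by simp
    then have "last (take u p @ Q @ drop (Suc w) p) = last Q" using Q(1) by simp
    also have "\<dots> = p ! w" by (rule Q(3))
    also have "\<dots> = last p" using True p(1) by (simp add: last_conv_nth True[symmetric])
    finally show ?thesis using p(3) by simp
  next
    case False then show ?thesis using p assms(3) by (simp add: last_drop)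
  qed
  have dis: "distinct (take u p @ Q @ drop (Suc w) p)"
    using p(4) Q(4) assms(2,5,6) set_take_disj_set_drop_if_distinct[of p u "Suc w"]
    by (auto simp: distinct_take distinct_drop)
  have s1: "successively (\<lambda>x y. (x,y) \<in> E) (Q @ drop (Suc w) p)"
  proof -
    have "drop (Suc w) p = [] \<or> (last Q, hd (drop (Suc w) p)) \<in> E"
      using Q(3) edge[of w] by (cases "Suc w < length p") (auto simp: hd_drop_conv_nth)
    then show ?thesis using Q(5) p(5) by (auto simp: successively_append_iff successively_drop)
  qed
  have "successively (\<lambda>x y. (x,y) \<in> E) (take u p @ (Q @ drop (Suc w) p))"
  proof -
    have "take u p = [] \<or> (last (take u p), hd (Q @ drop (Suc w) p)) \<in> E"
    proof (cases u)
      case 0 then show ?thesis by simp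
    next
      case (Suc u')
      then have "last (take u p) = p ! u'" using assms(2,3) by (simp add: last_take')
      then show ?thesis using edge[of u'] Q(1,2) Suc assms(2,3) by auto
    qed
    then show ?thesis using s1 p(5) by (auto simp: successively_append_iff successively_take)
  qed
  then show ?thesis using hd lst dis Q(1) unfolding sp_alt by auto
qed

lemma simple_path_mono: "simple_path E a b p \<Longrightarrow> E \<subseteq> E' \<Longrightarrow> simple_path E' a b p"
  unfolding simple_path_def by blast

lemma hall:
  assumes "finite X" "finite Y" "\<forall>S\<subseteq>X. card S \<le> card {y\<in>Y. \<exists>x\<in>S. Z x y}"
  shows "\<exists>f. inj_on f X \<and> (\<forall>x\<in>X. f x \<in> Y \<and> Z x (f x))"
  using assms
proof (induction "card X" arbitrary: X Y rule: less_induct)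
  case less
  define Nb where "Nb S Y' = {y\<in>Y'. \<exists>x\<in>S. Z x y}" for S Y'
  have finNb: "finite (Nb S Y')" if "finite Y'" for S Y' using that by (simp add: Nb_def)
  have hall: "card S \<le> card (Nb S Y)" if "S \<subseteq> X" for S using less.prems(3) that by (simp add: Nb_def)
  show ?case
  proof (cases "X = {}")
    case True then show ?thesis by auto
  next
    case False
    show ?thesis
    proof (cases "\<exists>S. S \<subseteq> X \<and> S \<noteq> {} \<and> S \<noteq> X \<and> card (Nb S Y) = card S")
      case True
      then obtain S where S: "S \<subseteq> X" "S \<noteq> {}" "S \<noteq> X" "card (Nb S Y) = card S" by blast
      have finS: "finite S" using S(1) less.prems(1) finite_subset by blast
      have cS: "card S < card X" using S less.prems(1) psubset_card_mono by blast
      have "\<exists>f. inj_on f S \<and> (\<forall>x\<in>S. f x \<in> Nb S Y \<and> Z x (f x))"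
      proof (rule less.hyps[OF cS finS finNb[OF less.prems(2)]], intro allI impI)
        fix S' assume "S' \<subseteq> S"
        moreover have "{y \<in> Nb S Y. \<exists>x\<in>S'. Z x y} = Nb S' Y" using \<open>S' \<subseteq> S\<close> by (auto simp: Nb_def)
        ultimately show "card S' \<le> card {y \<in> Nb S Y. \<exists>x\<in>S'. Z x y}" using hall S(1) by auto
      qed
      then obtain f1 where f1: "inj_on f1 S" "\<forall>x\<in>S. f1 x \<in> Nb S Y \<and> Z x (f1 x)" by blast
      have "card (X - S) = card X - card S" using finS S(1) by (rule card_Diff_subset)
      moreover have "card S > 0" using finS S(2) by (simp add: card_gt_0_iff)
      moreover have "card S \<le> card X" using less.prems(1) S(1) by (rule card_mono)
      ultimately have cXS: "card (X - S) < card X" by linarith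
      have "\<exists>f. inj_on f (X - S) \<and> (\<forall>x\<in>X - S. f x \<in> Y - Nb S Y \<and> Z x (f x))"
      proof (rule less.hyps[OF cXS], use less.prems in simp, use less.prems in simp, intro allI impI)
        fix S' assume S': "S' \<subseteq> X - S"
        define K where "K = {y \<in> Y - Nb S Y. \<exists>x\<in>S'. Z x y}"
        have finS': "finite S'" using S' less.prems(1) finite_subset by blast
        have "Nb (S' \<union> S) Y = K \<union> Nb S Y" by (auto simp: Nb_def K_def)
        moreover have "K \<inter> Nb S Y = {}" by (auto simp: K_def)
        moreover have "finite K" using less.prems(2) by (simp add: K_def)
        ultimately have "card (Nb (S' \<union> S) Y) = card K + card (Nb S Y)"
          using finNb[OF less.prems(2)] by (simp add: card_Un_disjoint)
        moreover have "card (S' \<union> S) = card S' + card S"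
          using S' finS finS' by (subst card_Un_disjoint) auto
        moreover have "card (S' \<union> S) \<le> card (Nb (S' \<union> S) Y)" using S' S(1) by (intro hall) auto
        ultimately show "card S' \<le> card {y \<in> Y - Nb S Y. \<exists>x\<in>S'. Z x y}" using S(4) by (simp add: K_def)
      qed
      then obtain f2 where f2: "inj_on f2 (X - S)" "\<forall>x\<in>X - S. f2 x \<in> Y - Nb S Y \<and> Z x (f2 x)" by blast
      define f where "f x = (if x \<in> S then f1 x else f2 x)" for x
      have "inj_on f X"
        unfolding inj_on_def
      proof (intro ballI impI)
        fix x y assume xy: "x \<in> X" "y \<in> X" "f x = f y"
        show "x = y"
        proof (cases "x \<in> S"; cases "y \<in> S")
          assume "x \<in> S" "y \<in> S" then show ?thesis using xy f1(1) unfolding f_def inj_on_def by auto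
        next
          assume "x \<notin> S" "y \<notin> S" then show ?thesis using xy f2(1) unfolding f_def inj_on_def by auto
        next
          assume a: "x \<in> S" "y \<notin> S"
          have "f x \<in> Nb S Y" using f1(2) a by (simp add: f_def)
          moreover have "f y \<notin> Nb S Y" using f2(2) a xy(2) by (simp add: f_def)
          ultimately show ?thesis using xy by simp
        next
          assume a: "x \<notin> S" "y \<in> S"
          have "f y \<in> Nb S Y" using f1(2) a by (simp add: f_def)
          moreover have "f x \<notin> Nb S Y" using f2(2) a xy(1) by (simp add: f_def)
          ultimately show ?thesis using xy by simp
        qed
      qed
      moreover have "\<forall>x\<in>X. f x \<in> Y \<and> Z x (f x)" using f1 f2 by (auto simp: f_def Nb_def)
      ultimately show ?thesis by blast
    next
      case False
      have strict: "card S < card (Nb S Y)" if "S \<subseteq> X" "S \<noteq> {}" "S \<noteq> X" for S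
      proof -
        have "card (Nb S Y) \<noteq> card S" using False that by blast
        then show ?thesis using hall[OF that(1)] by linarith
      qed
      obtain x0 where x0: "x0 \<in> X" using \<open>X \<noteq> {}\<close> by blast
      have "card {x0} \<le> card (Nb {x0} Y)" using x0 by (intro hall) auto
      then have "Nb {x0} Y \<noteq> {}" by auto
      then obtain y0 where y0: "y0 \<in> Y" "Z x0 y0" by (auto simp: Nb_def)
      have cX: "card (X - {x0}) < card X" by (rule card_Diff1_less[OF less.prems(1) x0])
      have "\<exists>f. inj_on f (X - {x0}) \<and> (\<forall>x\<in>X - {x0}. f x \<in> Y - {y0} \<and> Z x (f x))"
      proof (rule less.hyps[OF cX], use less.prems in simp, use less.prems in simp, intro allI impI)
        fix S' assume S': "S' \<subseteq> X - {x0}"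
        show "card S' \<le> card {y \<in> Y - {y0}. \<exists>x\<in>S'. Z x y}"
        proof (cases "S' = {}")
          case True then show ?thesis by simp
        next
          case False
          have "card S' < card (Nb S' Y)" using strict[of S'] S' False x0 by auto
          moreover have "{y \<in> Y - {y0}. \<exists>x\<in>S'. Z x y} = Nb S' Y - {y0}" by (auto simp: Nb_def)
          moreover have "card (Nb S' Y - {y0}) \<ge> card (Nb S' Y) - 1"
            using finNb[OF less.prems(2)] by (simp add: card_Diff_singleton_if)
          ultimately show ?thesis by simp
        qed
      qed
      then obtain f2 where f2: "inj_on f2 (X - {x0})" "\<forall>x\<in>X - {x0}. f2 x \<in> Y - {y0} \<and> Z x (f2 x)" by blast
      define f where "f = f2(x0 := y0)"
      have "inj_on f X" unfolding inj_on_def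
      proof (intro ballI impI)
        fix x y assume xy: "x \<in> X" "y \<in> X" "f x = f y"
        show "x = y"
        proof (cases "x = x0"; cases "y = x0")
          assume "x \<noteq> x0" "y \<noteq> x0" then show ?thesis using xy f2(1) unfolding f_def inj_on_def by auto
        next
          assume "x = x0" "y \<noteq> x0" then show ?thesis using xy f2(2) unfolding f_def by auto
        next
          assume "x \<noteq> x0" "y = x0" then show ?thesis using xy f2(2) unfolding f_def by auto
        qed simp
      qed
      moreover have "\<forall>x\<in>X. f x \<in> Y \<and> Z x (f x)" using f2 y0 by (auto simp: f_def)
      ultimately show ?thesis by blast
    qed
  qed
qed

lemma sum_eq_pointwise:
  fixes f g :: "'a \<Rightarrow> nat"
  assumes "finite A" "\<forall>x\<in>A. f x \<le> g x" "sum f A = sum g A" "x \<in> A"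
  shows "f x = g x"
proof (rule ccontr)
  assume "f x \<noteq> g x"
  then have "f x < g x" using assms(2,4) by fastforce
  then have "sum f A < sum g A" using assms(1,2,4) by (intro sum_strict_mono_ex1) auto
  then show False using assms(3) by simp
qed

lemma sum_by_value:
  fixes f :: "'a \<Rightarrow> nat"
  assumes "finite A" "\<forall>v\<in>A. f v < q"
  shows "(\<Sum>v\<in>A. f v) = (\<Sum>i<q. i * card {v\<in>A. f v = i})"
proof -
  have "(\<Sum>v\<in>A. f v) = (\<Sum>v\<in>A. \<Sum>i<q. if f v = i then i else 0)"
    using assms(2) by (intro sum.cong) (auto simp: sum.delta')
  also have "\<dots> = (\<Sum>i<q. \<Sum>v\<in>A. if f v = i then i else 0)" by (rule sum.swap)
  also have "\<dots> = (\<Sum>i<q. i * card {v\<in>A. f v = i})"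
    using assms(1) by (intro sum.cong) (auto simp: sum.inter_filter[symmetric])
  finally show ?thesis .
qed

lemma sum_set_nth:
  assumes "distinct p"
  shows "(\<Sum>x\<in>set p. f x) = (\<Sum>t<length p. f (p ! t))"
proof -
  have "(\<Sum>x\<in>set p. f x) = sum_list (map f p)" using assms by (simp add: sum_list_distinct_conv_sum_set)
  also have "\<dots> = (\<Sum>t<length p. f (p ! t))" by (simp add: sum_list_sum_nth atLeast0LessThan)
  finally show ?thesis .
qed

locale blk =
  fixes V :: "'v::linorder set" and E :: "('v \<times> 'v) set" and Ins :: "'v set" and out :: 'v
    and q s :: nat and rb cb :: "'v \<Rightarrow> nat"
  assumes core: "core_network V E Ins out"
    and cardIns: "card Ins \<ge> 2"
    and fk: "fk_decomposition V (hH_nz E Ins out) q rb cb"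
    and sq: "s < q"
    and sb: "structural_block Ins out {v \<in> V. rb v = s} {v \<in> V. cb v = s}"
begin

abbreviation "Z \<equiv> hH_nz E Ins out"
definition "R = {v \<in> V. rb v = s}"
definition "C = {v \<in> V. cb v = s}"
definition "D = R \<inter> C"

lemma finV: "finite V" and EV: "E \<subseteq> V \<times> V" and InsV: "Ins \<subseteq> V" and outV: "out \<in> V"
  and out_nIns: "out \<notin> Ins" and reach_out: "\<And>v. v \<in> V \<Longrightarrow> (v, out) \<in> E\<^sup>*"
  and reach_in: "\<And>v. v \<in> V \<Longrightarrow> \<exists>i\<in>Ins. (i, v) \<in> E\<^sup>*"
  using core unfolding core_network_def by auto

lemma Ins_ne: "Ins \<noteq> {}" using cardIns by auto

lemma tri: "j \<in> V \<Longrightarrow> l \<in> V \<Longrightarrow> Z j l \<Longrightarrow> rb j \<le> cb l"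
  using fk unfolding fk_decomposition_def by (meson not_le)

lemma bq: "v \<in> V \<Longrightarrow> rb v < q \<and> cb v < q"
  using fk unfolding fk_decomposition_def by auto

lemma FI: "fully_indecomposable Z R C"
  using fk sq unfolding fk_decomposition_def R_def C_def by auto

lemma Z_self: "v \<noteq> out \<Longrightarrow> Z v v" by (simp add: hH_nz_def)
lemma Z_edge: "l \<noteq> out \<Longrightarrow> (l, j) \<in> E \<Longrightarrow> Z j l" by (simp add: hH_nz_def)
lemma Z_in: "j \<in> Ins \<Longrightarrow> Z j out" by (simp add: hH_nz_def)
lemma Z_E: "Z j l \<Longrightarrow> l \<noteq> out \<Longrightarrow> j \<noteq> l \<Longrightarrow> (l, j) \<in> E" by (simp add: hH_nz_def)

lemma finR: "finite R" and finC: "finite C" and RV: "R \<subseteq> V" and CV: "C \<subseteq> V"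
  using finV by (auto simp: R_def C_def)

lemma cardRC: "card R = card C" and R_ne: "R \<noteq> {}"
  using FI unfolding fully_indecomposable_def by auto

lemma out_nC: "out \<notin> C"
proof
  assume oc: "out \<in> C"
  then have nI: "\<not> (\<exists>j\<in>R. j \<in> Ins)" using sb unfolding structural_block_def R_def C_def by auto
  have h: "\<forall>S T. S \<subseteq> R \<longrightarrow> T \<subseteq> C \<longrightarrow> S \<noteq> {} \<longrightarrow> T \<noteq> {} \<longrightarrow> card R \<le> card S + card T \<longrightarrow>
        (\<exists>j\<in>S. \<exists>l\<in>T. Z j l)" using FI unfolding fully_indecomposable_def by blast
  have "\<exists>j\<in>R. \<exists>l\<in>{out}. Z j l" using h[rule_format, of R "{out}"] oc R_ne by auto
  then show False using nI by (auto simp: hH_nz_def)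
qed

lemma cardD: "card D = card R - 1"
proof -
  have "{l \<in> R \<inter> C. l \<noteq> out} = D" using out_nC by (auto simp: D_def)
  then show ?thesis using sb unfolding structural_block_def R_def[symmetric] C_def[symmetric] by simp
qed

lemma cardR_pos: "card R \<ge> 1" using R_ne finR by (simp add: Suc_le_eq card_gt_0_iff)

lemma card_RmC: "card (R - C) = 1"
proof -
  have "card (R - C) = card R - card (R \<inter> C)" using finR by (simp add: card_Diff_subset_Int)
  then show ?thesis using cardD cardR_pos by (simp add: D_def)
qed

lemma card_CmR: "card (C - R) = 1"
proof -
  have "card (C - R) = card C - card (C \<inter> R)" using finC by (simp add: card_Diff_subset_Int)
  then show ?thesis using cardD cardR_pos cardRC by (simp add: D_def Int_commute)
qed

definition "r0 = (SOME x. R - C = {x})"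
definition "c0 = (SOME x. C - R = {x})"

lemma RmC: "R - C = {r0}"
proof -
  obtain x where "R - C = {x}" using card_RmC card_1_singletonE by blast
  then have "\<exists>x. R - C = {x}" by blast
  from someI_ex[OF this] show ?thesis unfolding r0_def .
qed
lemma CmR: "C - R = {c0}"
proof -
  obtain x where "C - R = {x}" using card_CmR card_1_singletonE by blast
  then have "\<exists>x. C - R = {x}" by blast
  from someI_ex[OF this] show ?thesis unfolding c0_def .
qed

lemma r0R: "r0 \<in> R" and r0C: "r0 \<notin> C" and c0C: "c0 \<in> C" and c0R: "c0 \<notin> R"
  using RmC CmR by auto

lemma R_eq: "R = insert r0 D" and C_eq: "C = insert c0 D"
  using RmC CmR unfolding D_def by auto

lemma c0r0: "c0 \<noteq> r0" using c0C r0C by auto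
lemma c0out: "c0 \<noteq> out" using c0C out_nC by auto
lemma c0V: "c0 \<in> V" and r0V: "r0 \<in> V" using c0C r0R RV CV by auto
lemma c0D: "c0 \<notin> D" and r0D: "r0 \<notin> D" using c0R r0C by (auto simp: D_def)
lemma DV: "D \<subseteq> V" using RV by (auto simp: D_def)
lemma Dout: "out \<notin> D" using out_nC by (auto simp: D_def)
lemma B_eq: "R \<union> C = insert c0 (insert r0 D)" using R_eq C_eq by auto

lemma expand:
  assumes "S \<subseteq> R" "T \<subseteq> C" "S \<noteq> {}" "T \<noteq> {}" "card R \<le> card S + card T"
  shows "\<exists>j\<in>S. \<exists>l\<in>T. j = l \<or> (l, j) \<in> E"
proof -
  obtain j l where jl: "j \<in> S" "l \<in> T" "Z j l"
    using FI assms unfolding fully_indecomposable_def by blast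
  have "l \<noteq> out" using jl(2) assms(2) out_nC by auto
  then show ?thesis using jl Z_E by blast
qed

lemma sum_eq: "(\<Sum>v\<in>V. rb v) = (\<Sum>v\<in>V. cb v)"
proof -
  have "(\<Sum>v\<in>V. rb v) = (\<Sum>i<q. i * card {v\<in>V. rb v = i})" using finV bq by (intro sum_by_value) auto
  also have "\<dots> = (\<Sum>i<q. i * card {v\<in>V. cb v = i})"
    using fk unfolding fk_decomposition_def fully_indecomposable_def by (intro sum.cong) auto
  also have "\<dots> = (\<Sum>v\<in>V. cb v)" using finV bq by (intro sum_by_value[symmetric]) auto
  finally show ?thesis .
qed

lemma path_V: "simple_path E a b p \<Longrightarrow> a \<in> V \<Longrightarrow> set p \<subseteq> V"
proof
  fix x assume p: "simple_path E a b p" "a \<in> V" and "x \<in> set p"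
  then obtain t where t: "t < length p" "p ! t = x" by (auto simp: in_set_conv_nth)
  show "x \<in> V"
  proof (cases t)
    case 0 then show ?thesis using p t by (auto simp: simple_path_def hd_conv_nth)
  next
    case (Suc t') then have "(p ! t', p ! t) \<in> E" using p t unfolding simple_path_def by auto
    then show ?thesis using EV t by auto
  qed
qed

lemma path_last: "simple_path E a b p \<Longrightarrow> p ! (length p - 1) = b"
  unfolding simple_path_def by (metis last_conv_nth)

lemma path_first: "simple_path E a b p \<Longrightarrow> p ! 0 = a"
  unfolding simple_path_def by (metis hd_conv_nth)

lemma perm:
  assumes i: "i \<in> Ins" and p: "simple_path E i out p"
  shows "\<forall>v\<in>V - set p. rb v = cb v" "rb (p ! 0) = cb out"
    "\<And>t. Suc t < length p \<Longrightarrow> rb (p ! Suc t) = cb (p ! t)"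
proof -
  define P where "P = set p"
  define n where "n = length p"
  have iV: "i \<in> V" using i InsV by blast
  have pV: "P \<subseteq> V" unfolding P_def by (rule path_V[OF p iV])
  have dist: "distinct p" and ne: "p \<noteq> []" using p unfolding simple_path_def by auto
  obtain m where nm: "n = Suc m" using ne by (cases p) (auto simp: n_def)
  have pm: "p ! m = out" using path_last[OF p] nm by (simp add: n_def)
  have p0: "p ! 0 = i" using path_first[OF p] .
  have outP: "out \<in> P" unfolding P_def pm[symmetric] using nm n_def by simp
  have le1: "\<forall>v\<in>V - P. rb v \<le> cb v"
  proof
    fix v assume v: "v \<in> V - P"
    then have "v \<noteq> out" using outP by auto
    then show "rb v \<le> cb v" using v by (intro tri Z_self) auto
  qed
  have le2: "rb (p ! 0) \<le> cb out" unfolding p0 using iV outV by (intro tri Z_in i)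
  have le3: "\<forall>t<m. rb (p ! Suc t) \<le> cb (p ! t)"
  proof (intro allI impI)
    fix t assume t: "t < m"
    have e: "(p ! t, p ! Suc t) \<in> E" using p t nm unfolding simple_path_def n_def by auto
    have "p ! t \<noteq> p ! m" using t nm dist nth_eq_iff_index_eq[of p t m] by (simp add: n_def)
    then have "p ! t \<noteq> out" using pm by simp
    moreover have "p ! Suc t \<in> V" "p ! t \<in> V" using e EV by auto
    ultimately show "rb (p ! Suc t) \<le> cb (p ! t)" using e by (intro tri Z_edge) auto
  qed
  have sP: "(\<Sum>v\<in>P. f v) = f (p ! 0) + (\<Sum>t<m. f (p ! Suc t))" for f :: "'v \<Rightarrow> nat"
  proof -
    have "(\<Sum>v\<in>P. f v) = (\<Sum>t<Suc m. f (p ! t))" using sum_set_nth[OF dist, of f] nm by (simp add: P_def n_def)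
    also have "\<dots> = f (p ! 0) + (\<Sum>t<m. f (p ! Suc t))" by (rule sum.lessThan_Suc_shift)
    finally show ?thesis .
  qed
  have sP2: "(\<Sum>v\<in>P. f v) = (\<Sum>t<m. f (p ! t)) + f out" for f :: "'v \<Rightarrow> nat"
  proof -
    have "(\<Sum>v\<in>P. f v) = (\<Sum>t<Suc m. f (p ! t))" using sum_set_nth[OF dist, of f] nm by (simp add: P_def n_def)
    also have "\<dots> = (\<Sum>t<m. f (p ! t)) + f (p ! m)" by (rule sum.lessThan_Suc)
    finally show ?thesis using pm by simp
  qed
  have split: "(\<Sum>v\<in>V. f v) = (\<Sum>v\<in>V - P. f v) + (\<Sum>v\<in>P. f v)" for f :: "'v \<Rightarrow> nat"
    using finV pV by (simp add: sum.subset_diff)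
  have tot: "(\<Sum>v\<in>V - P. rb v) + (rb (p ! 0) + (\<Sum>t<m. rb (p ! Suc t)))
     = (\<Sum>v\<in>V - P. cb v) + ((\<Sum>t<m. cb (p ! t)) + cb out)"
    using sum_eq unfolding split[of rb] split[of cb] sP[of rb] sP2[of cb] .
  have i1: "(\<Sum>v\<in>V - P. rb v) \<le> (\<Sum>v\<in>V - P. cb v)" using le1 by (intro sum_mono) auto
  have i3: "(\<Sum>t<m. rb (p ! Suc t)) \<le> (\<Sum>t<m. cb (p ! t))" using le3 by (intro sum_mono) auto
  have e1: "(\<Sum>v\<in>V - P. rb v) = (\<Sum>v\<in>V - P. cb v)" using tot i1 i3 le2 by linarith
  have e3: "(\<Sum>t<m. rb (p ! Suc t)) = (\<Sum>t<m. cb (p ! t))" using tot i1 i3 le2 by linarith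
  have fVP: "finite (V - P)" using finV by blast
  show "\<forall>v\<in>V - set p. rb v = cb v"
  proof
    fix v assume "v \<in> V - set p"
    then show "rb v = cb v" using sum_eq_pointwise[OF fVP le1 e1] unfolding P_def by blast
  qed
  show "rb (p ! 0) = cb out" using tot i1 i3 le2 by linarith
  fix t assume "Suc t < length p"
  then have "t \<in> {..<m}" using nm by (simp add: n_def)
  then show "rb (p ! Suc t) = cb (p ! t)"
    using sum_eq_pointwise[of "{..<m}" "\<lambda>t. rb (p ! Suc t)" "\<lambda>t. cb (p ! t)" t] le3 e3 by blast
qed

end

context blk begin

lemma seg:
  assumes i: "i \<in> Ins" and p: "simple_path E i out p"
  obtains u w where "u < w" "w < length p" "p ! u = c0" "p ! w = r0"
    "\<And>t. t < length p \<Longrightarrow> p ! t \<in> R \<longleftrightarrow> u < t \<and> t \<le> w"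
    "\<And>t. t < length p \<Longrightarrow> p ! t \<in> C \<longleftrightarrow> u \<le> t \<and> t < w"
proof -
  have iV: "i \<in> V" using i InsV by blast
  have pV: "set p \<subseteq> V" by (rule path_V[OF p iV])
  have dist: "distinct p" and ne: "p \<noteq> []" using p unfolding simple_path_def by auto
  define n where "n = length p"
  have c0p: "c0 \<in> set p"
  proof (rule ccontr)
    assume "c0 \<notin> set p" then have "rb c0 = cb c0" using perm(1)[OF i p] c0V by auto
    then show False using c0C c0R by (auto simp: R_def C_def)
  qed
  have r0p: "r0 \<in> set p"
  proof (rule ccontr)
    assume "r0 \<notin> set p" then have "rb r0 = cb r0" using perm(1)[OF i p] r0V by auto
    then show False using r0C r0R by (auto simp: R_def C_def)
  qed
  obtain u where u: "u < n" "p ! u = c0" using c0p by (auto simp: in_set_conv_nth n_def)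
  obtain w where w: "w < n" "p ! w = r0" using r0p by (auto simp: in_set_conv_nth n_def)
  have ptV: "p ! t \<in> V" if "t < n" for t using that pV nth_mem[of t p] by (auto simp: n_def)
  have inR_iff: "p ! t \<in> R \<longleftrightarrow> rb (p ! t) = s" if "t < n" for t using ptV[OF that] by (auto simp: R_def)
  have inC_iff: "p ! t \<in> C \<longleftrightarrow> cb (p ! t) = s" if "t < n" for t using ptV[OF that] by (auto simp: C_def)
  have F1: "p ! 0 \<notin> R"
  proof -
    have "cb out \<noteq> s" using outV out_nC by (auto simp: C_def)
    then show ?thesis using perm(2)[OF i p] inR_iff[of 0] ne by (simp add: n_def)
  qed
  have F2: "(p ! Suc t \<in> R) = (p ! t \<in> C)" if "Suc t < n" for t
    using perm(3)[OF i p, of t] that inR_iff[of "Suc t"] inC_iff[of t] by (simp add: n_def)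
  have eqw: "p ! t = r0 \<longleftrightarrow> t = w" if "t < n" for t
    using nth_eq_iff_index_eq[OF dist, of t w] that w by (simp add: n_def)
  have equ: "p ! t = c0 \<longleftrightarrow> t = u" if "t < n" for t
    using nth_eq_iff_index_eq[OF dist, of t u] that u by (simp add: n_def)
  have Dr: "x \<in> D \<longleftrightarrow> x \<in> R \<and> x \<noteq> r0" for x using R_eq r0D by auto
  have F3: "(p ! t \<in> C) = ((p ! t \<in> R \<and> t \<noteq> w) \<or> t = u)" if "t < n" for t
  proof -
    have "(p ! t \<in> C) = (p ! t \<in> D \<or> p ! t = c0)" using C_eq by auto
    also have "\<dots> = ((p ! t \<in> R \<and> p ! t \<noteq> r0) \<or> p ! t = c0)" using Dr by auto
    also have "\<dots> = ((p ! t \<in> R \<and> t \<noteq> w) \<or> t = u)" using eqw[OF that] equ[OF that] by auto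
    finally show ?thesis .
  qed
  obtain m where nm: "n = Suc m" using ne by (cases p) (auto simp: n_def)
  have lastp: "p ! m = out" using path_last[OF p] nm by (simp add: n_def)
  have un: "u \<noteq> m" using u lastp c0out by auto
  have uw: "u \<noteq> w" using u w c0r0 by auto
  have "u < w"
  proof (rule ccontr)
    assume "\<not> u < w" then have wu: "w < u" using uw by auto
    have all: "u < t \<longrightarrow> t < n \<longrightarrow> p ! t \<in> R" for t
    proof (induction t)
      case 0 show ?case by simp
    next
      case (Suc t)
      show ?case
      proof (intro impI)
        assume a: "u < Suc t" "Suc t < n"
        show "p ! Suc t \<in> R"
        proof (cases "t = u")
          case True then show ?thesis using F2[OF a(2)] F3[of t] a by auto
        next
          case False then have ut: "u < t" using a by auto
          then have "p ! t \<in> R" using Suc.IH a by auto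
          moreover have "t \<noteq> w" using ut wu by auto
          ultimately show ?thesis using F2[OF a(2)] F3[of t] a by auto
        qed
      qed
    qed
    have um: "u < m" using u un nm by auto
    then have "p ! m \<in> R" using all[of m] nm by auto
    moreover have "m \<noteq> w" using wu um by auto
    ultimately have "p ! m \<in> C" using F3[of m] nm by auto
    then show False using lastp out_nC by auto
  qed
  have RI: "t < n \<longrightarrow> (p ! t \<in> R \<longleftrightarrow> u < t \<and> t \<le> w)" for t
  proof (induction t)
    case 0 show ?case using F1 by auto
  next
    case (Suc t)
    show ?case
    proof
      assume a: "Suc t < n"
      then have "p ! Suc t \<in> R \<longleftrightarrow> p ! t \<in> C" using F2 by blast
      also have "\<dots> \<longleftrightarrow> (p ! t \<in> R \<and> t \<noteq> w) \<or> t = u" using F3 a by auto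
      also have "\<dots> \<longleftrightarrow> ((u < t \<and> t \<le> w) \<and> t \<noteq> w) \<or> t = u" using Suc.IH a by auto
      also have "\<dots> \<longleftrightarrow> u < Suc t \<and> Suc t \<le> w" using \<open>u < w\<close> by auto
      finally show "p ! Suc t \<in> R \<longleftrightarrow> u < Suc t \<and> Suc t \<le> w" .
    qed
  qed
  have CI: "t < n \<Longrightarrow> p ! t \<in> C \<longleftrightarrow> u \<le> t \<and> t < w" for t using F3[of t] RI[of t] \<open>u < w\<close> by auto
  show thesis using that[of u w] \<open>u < w\<close> w u RI CI by (auto simp: n_def)
qed

lemma splice_B:
  assumes i: "i \<in> Ins" and p: "simple_path E i out p"
    and Q: "simple_path E c0 r0 Q" "set Q \<subseteq> R \<union> C"
  shows "\<exists>p'. simple_path E i out p' \<and> set Q \<subseteq> set p' \<and> (\<forall>x\<in>set p'. x \<in> R \<union> C \<longrightarrow> x \<in> set Q)"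
proof -
  obtain u w where uw: "u < w" "w < length p" "p ! u = c0" "p ! w = r0"
    "\<And>t. t < length p \<Longrightarrow> p ! t \<in> R \<longleftrightarrow> u < t \<and> t \<le> w"
    "\<And>t. t < length p \<Longrightarrow> p ! t \<in> C \<longleftrightarrow> u \<le> t \<and> t < w"
    using seg[OF i p] by blast
  have tk: "x \<notin> R \<union> C" if xin: "x \<in> set (take u p)" for x
  proof -
    obtain t where t: "t < length (take u p)" "take u p ! t = x" using xin unfolding in_set_conv_nth by blast
    then have "t < u" "t < length p" "p ! t = x" by auto
    then show ?thesis using uw(5,6)[of t] by auto
  qed
  have dr: "x \<notin> R \<union> C" if xin: "x \<in> set (drop (Suc w) p)" for x
  proof -
    obtain t where t: "t < length (drop (Suc w) p)" "drop (Suc w) p ! t = x" using xin unfolding in_set_conv_nth by blast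
    then have "Suc w + t < length p" "p ! (Suc w + t) = x" by auto
    then show ?thesis using uw(5,6)[of "Suc w + t"] by auto
  qed
  have sp: "simple_path E i out (take u p @ Q @ drop (Suc w) p)"
    using Q tk dr uw by (intro simple_path_splice[OF p]) auto
  show ?thesis
    by (rule exI[of _ "take u p @ Q @ drop (Suc w) p"]) (use sp tk dr in auto)
qed

lemma paths_exist: "i \<in> Ins \<Longrightarrow> \<exists>p. simple_path E i out p"
proof -
  assume i: "i \<in> Ins"
  then have "(i, out) \<in> E\<^sup>*" using reach_out InsV by auto
  moreover have "E \<inter> V \<times> V = E" using EV by auto
  ultimately have r: "(i, out) \<in> (E \<inter> V \<times> V)\<^sup>*" by simp
  have "i \<in> V" using i InsV by blast
  from rtrancl_simple_path[OF r this] show ?thesis by blast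
qed

lemma ss_c0r0:
  assumes "i \<in> Ins" "simple_path E i out p"
  shows "c0 \<in> set p" "r0 \<in> set p" "before_on p c0 r0"
proof -
  obtain u w where uw: "u < w" "w < length p" "p ! u = c0" "p ! w = r0"
    "\<And>t. t < length p \<Longrightarrow> p ! t \<in> R \<longleftrightarrow> u < t \<and> t \<le> w"
    "\<And>t. t < length p \<Longrightarrow> p ! t \<in> C \<longleftrightarrow> u \<le> t \<and> t < w"
    using seg[OF assms] by blast
  have "u < length p" using uw(1,2) by simp
  then show "c0 \<in> set p" using uw(3) nth_mem by metis
  show "r0 \<in> set p" using uw(2,4) nth_mem by metis
  show "before_on p c0 r0" unfolding before_on_def using uw(1-4) by blast
qed

lemma inner_seg:
  assumes i: "i \<in> Ins" and p: "simple_path E i out p" and x: "x \<in> set p" "x \<in> R \<union> C"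
  shows "\<exists>Q. simple_path E c0 r0 Q \<and> set Q \<subseteq> R \<union> C \<and> x \<in> set Q"
    "\<exists>u w t. u \<le> t \<and> t \<le> w \<and> w < length p \<and> p ! u = c0 \<and> p ! t = x \<and> p ! w = r0"
proof -
  obtain u w where uw: "u < w" "w < length p" "p ! u = c0" "p ! w = r0"
    "\<And>t. t < length p \<Longrightarrow> p ! t \<in> R \<longleftrightarrow> u < t \<and> t \<le> w"
    "\<And>t. t < length p \<Longrightarrow> p ! t \<in> C \<longleftrightarrow> u \<le> t \<and> t < w"
    using seg[OF i p] by blast
  obtain t where t: "t < length p" "p ! t = x" using x(1) by (auto simp: in_set_conv_nth)
  have tuw: "u \<le> t" "t \<le> w" using uw(5,6)[OF t(1)] t x(2) by auto
  define Q where "Q = drop u (take (Suc w) p)"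
  have sQ: "simple_path E c0 r0 Q"
    using simple_path_seg[OF p, of u w] uw by (simp add: Q_def)
  have memQ: "y \<in> set Q \<longleftrightarrow> (\<exists>t'. u \<le> t' \<and> t' \<le> w \<and> p ! t' = y)" for y
  proof
    assume "y \<in> set Q"
    then obtain k where k: "k < length Q" "Q ! k = y" unfolding in_set_conv_nth by blast
    then show "\<exists>t'. u \<le> t' \<and> t' \<le> w \<and> p ! t' = y" using uw(1,2)
      by (intro exI[of _ "u + k"]) (auto simp: Q_def)
  next
    assume "\<exists>t'. u \<le> t' \<and> t' \<le> w \<and> p ! t' = y"
    then obtain t' where t': "u \<le> t'" "t' \<le> w" "p ! t' = y" by blast
    have "Q ! (t' - u) = y" "t' - u < length Q" using t' uw(1,2) by (auto simp: Q_def)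
    then show "y \<in> set Q" by (metis nth_mem)
  qed
  have "set Q \<subseteq> R \<union> C"
  proof
    fix y assume "y \<in> set Q"
    then obtain t' where t': "u \<le> t'" "t' \<le> w" "p ! t' = y" using memQ by blast
    then show "y \<in> R \<union> C" using uw(5,6)[of t'] uw(1,2) by (cases "t' = u") auto
  qed
  then show "\<exists>Q. simple_path E c0 r0 Q \<and> set Q \<subseteq> R \<union> C \<and> x \<in> set Q"
    using sQ memQ[of x] t tuw by blast
  show "\<exists>u w t. u \<le> t \<and> t \<le> w \<and> w < length p \<and> p ! u = c0 \<and> p ! t = x \<and> p ! w = r0"
    using tuw uw t by blast
qed

abbreviation "Lc \<equiv> L_set V E Ins out c0 r0"
abbreviation "L'c \<equiv> L'_set V E Ins out c0 r0"

lemma B_simple: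
  assumes i0: "i0 \<in> Ins" and p0: "simple_path E i0 out p0" and d: "d \<in> set p0" "d \<in> R \<union> C"
  shows "\<forall>i\<in>Ins. simple_node E i out d" "d \<in> Lc"
proof -
  obtain Q where Q: "simple_path E c0 r0 Q" "set Q \<subseteq> R \<union> C" "d \<in> set Q"
    using inner_seg(1)[OF i0 p0 d] by blast
  show as: "\<forall>i\<in>Ins. simple_node E i out d"
  proof
    fix i assume i: "i \<in> Ins"
    obtain p where p: "simple_path E i out p" using paths_exist[OF i] by blast
    obtain p' where "simple_path E i out p'" "set Q \<subseteq> set p'" using splice_B[OF i p Q(1,2)] by blast
    then show "simple_node E i out d" using Q(3) unfolding simple_node_def by blast
  qed
  have dV: "d \<in> V" using d(2) RV CV by blast
  show "d \<in> Lc"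
    unfolding L_set_def abs_simple_def using dV as i0 p0 inner_seg(2)[OF i0 p0 d] by blast
qed

lemma c0r0_L: "c0 \<in> Lc" "r0 \<in> Lc"
proof -
  obtain i0 where i0: "i0 \<in> Ins" using Ins_ne by blast
  obtain p where p: "simple_path E i0 out p" using paths_exist[OF i0] by blast
  show "c0 \<in> Lc" using B_simple(2)[OF i0 p] ss_c0r0[OF i0 p] c0C by blast
  show "r0 \<in> Lc" using B_simple(2)[OF i0 p] ss_c0r0[OF i0 p] r0R by blast
qed

lemma L_sub: "Lc \<subseteq> R \<union> C"
proof
  fix v assume "v \<in> Lc"
  then obtain i p x y z where ip: "i \<in> Ins" "simple_path E i out p" and
    xyz: "x \<le> y" "y \<le> z" "z < length p" "p ! x = c0" "p ! y = v" "p ! z = r0"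
    unfolding L_set_def by blast
  obtain u w where uw: "u < w" "w < length p" "p ! u = c0" "p ! w = r0"
    "\<And>t. t < length p \<Longrightarrow> p ! t \<in> R \<longleftrightarrow> u < t \<and> t \<le> w"
    "\<And>t. t < length p \<Longrightarrow> p ! t \<in> C \<longleftrightarrow> u \<le> t \<and> t < w"
    using seg[OF ip] by blast
  have dist: "distinct p" using ip(2) unfolding simple_path_def by auto
  have "x = u" using nth_eq_iff_index_eq[OF dist, of x u] xyz uw by auto
  moreover have "z = w" using nth_eq_iff_index_eq[OF dist, of z w] xyz uw by auto
  ultimately show "v \<in> R \<union> C"
  proof (cases "y = x")
    case True then show ?thesis using xyz c0C by auto
  next
    case False
    assume "x = u" "z = w"
    then have "u < y" "y \<le> w" "y < length p" using False xyz by auto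
    then show ?thesis using uw(5)[of y] xyz by auto
  qed
qed

lemma cb_mono:
  assumes i: "i \<in> Ins" and S: "simple_path E i out S"
    and xy: "(x, y) \<in> (E \<inter> (V - set S) \<times> (V - set S))\<^sup>*"
  shows "cb y \<le> cb x"
  using xy
proof (induction rule: rtrancl_induct)
  case base then show ?case by simp
next
  case (step y z)
  have outS: "out \<in> set S" using S unfolding simple_path_def by auto
  have yz: "(y, z) \<in> E" "y \<in> V" "z \<in> V" "y \<notin> set S" "z \<notin> set S" using step.hyps(2) by auto
  have "y \<noteq> out" using yz outS by auto
  then have "rb z \<le> cb y" using yz by (intro tri Z_edge) auto
  moreover have "rb z = cb z" using perm(1)[OF i S] yz by auto
  ultimately show ?case using step.IH by simp
qed

lemma L'_sub: "L'c \<subseteq> R \<union> C"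
proof
  fix v assume v: "v \<in> L'c"
  show "v \<in> R \<union> C"
  proof (cases "v \<in> Lc")
    case True then show ?thesis using L_sub by blast
  next
    case False
    then obtain i S u where iS: "i \<in> Ins" "simple_path E i out S" and u: "u \<in> Lc" and
      cs: "cs_equiv V E S u v" and vV: "v \<in> V"
      using v unfolding L'_set_def by blast
    have uS: "u \<notin> set S" and vS: "v \<notin> set S" using cs unfolding cs_equiv_def by auto
    have "u \<noteq> c0" "u \<noteq> r0" using uS ss_c0r0[OF iS] by auto
    then have uD: "u \<in> D" using u L_sub B_eq by auto
    have "cb v \<le> cb u" "cb u \<le> cb v"
      using cs unfolding cs_equiv_def by (auto intro: cb_mono[OF iS])
    then have "cb v = s" using uD by (auto simp: D_def C_def)
    moreover have "rb v = cb v" using perm(1)[OF iS] vV vS by auto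
    ultimately show ?thesis using vV by (auto simp: R_def C_def)
  qed
qed

end

context blk begin

lemma no_mid:
  assumes c: "abs_super_simple E Ins out c" "c \<noteq> c0" "c \<noteq> r0"
    and i: "i \<in> Ins" and p: "simple_path E i out p"
    and b1: "before_on p c0 c" and b2: "before_on p c r0"
  shows False
proof -
  obtain u w where uw: "u < w" "w < length p" "p ! u = c0" "p ! w = r0"
    "\<And>t. t < length p \<Longrightarrow> p ! t \<in> R \<longleftrightarrow> u < t \<and> t \<le> w"
    "\<And>t. t < length p \<Longrightarrow> p ! t \<in> C \<longleftrightarrow> u \<le> t \<and> t < w"
    using seg[OF i p] by blast
  have dist: "distinct p" using p unfolding simple_path_def by auto
  obtain x y where xy: "x < y" "y < length p" "p ! x = c0" "p ! y = c" using b1 unfolding before_on_def by blast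
  obtain y' z where yz: "y' < z" "z < length p" "p ! y' = c" "p ! z = r0" using b2 unfolding before_on_def by blast
  have "x = u" using nth_eq_iff_index_eq[OF dist, of x u] xy uw by auto
  moreover have "z = w" using nth_eq_iff_index_eq[OF dist, of z w] yz uw by auto
  moreover have "y' = y" using nth_eq_iff_index_eq[OF dist, of y' y] xy yz by auto
  ultimately have "u < y" "y < w" using xy yz by auto
  then have cD: "c \<in> D" using uw(5,6)[of y] xy by (auto simp: D_def)
  define W' where "W' = insert c0 (D - {c})"
  define Y where "Y = {y \<in> D - {c}. (c0, y) \<in> (E \<inter> W' \<times> W')\<^sup>*}"
  define S where "S = R - insert c Y"
  define T where "T = insert c0 Y"
  have YD: "Y \<subseteq> D - {c}" by (auto simp: Y_def)
  have finD: "finite D" using finR by (auto simp: D_def)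
  have finY: "finite Y" using YD finD finite_subset by blast
  have cY: "c \<notin> Y" and c0Y: "c0 \<notin> Y" and r0Y: "r0 \<notin> Y" using YD c0D r0D by auto
  have SR: "S \<subseteq> R" and TC: "T \<subseteq> C" using YD c0C by (auto simp: S_def T_def D_def)
  have r0S: "r0 \<in> S" using r0R cY r0Y c by (auto simp: S_def)
  have icR: "insert c Y \<subseteq> R" using cD YD by (auto simp: D_def)
  have cS: "card S = card R - card (insert c Y)" unfolding S_def
    using finR icR by (meson card_Diff_subset finite_subset)
  have ciY: "card (insert c Y) = Suc (card Y)" using finY cY by simp
  have cT: "card T = Suc (card Y)" using finY c0Y by (simp add: T_def)
  have "card (insert c Y) \<le> card R" using finR icR by (rule card_mono)
  then have "card R \<le> card S + card T" using cS ciY cT by linarith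
  then obtain j l where jl: "j \<in> S" "l \<in> T" "j = l \<or> (l, j) \<in> E"
    using expand[OF SR TC] r0S by (auto simp: T_def)
  have "j \<noteq> l" using jl c0R by (auto simp: S_def T_def)
  then have lj: "(l, j) \<in> E" using jl by auto
  have lW: "l \<in> W'" and c0l: "(c0, l) \<in> (E \<inter> W' \<times> W')\<^sup>*" using jl(2) YD by (auto simp: T_def Y_def W'_def)
  have jr: "j = r0"
  proof (rule ccontr)
    assume "j \<noteq> r0"
    then have jD: "j \<in> D" "j \<noteq> c" using jl(1) R_eq by (auto simp: S_def)
    then have "j \<in> W'" by (auto simp: W'_def)
    then have "(c0, j) \<in> (E \<inter> W' \<times> W')\<^sup>*" using c0l lj lW by (meson IntI mem_Sigma_iff rtrancl.rtrancl_into_rtrancl)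
    then have "j \<in> Y" using jD by (auto simp: Y_def)
    then show False using jl(1) by (auto simp: S_def)
  qed
  define W'' where "W'' = insert r0 W'"
  have "(E \<inter> W' \<times> W')\<^sup>* \<subseteq> (E \<inter> W'' \<times> W'')\<^sup>*" by (rule rtrancl_mono) (auto simp: W''_def)
  then have "(c0, l) \<in> (E \<inter> W'' \<times> W'')\<^sup>*" using c0l by blast
  moreover have "(l, r0) \<in> E \<inter> W'' \<times> W''" using lj jr lW by (auto simp: W''_def)
  ultimately have "(c0, r0) \<in> (E \<inter> W'' \<times> W'')\<^sup>*" by (rule rtrancl.rtrancl_into_rtrancl)
  moreover have "c0 \<in> W''" by (simp add: W''_def W'_def)
  ultimately have "\<exists>Q. simple_path E c0 r0 Q \<and> set Q \<subseteq> W''" by (rule rtrancl_simple_path)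
  then obtain Q where Q: "simple_path E c0 r0 Q" "set Q \<subseteq> W''" by blast
  have W''B: "W'' \<subseteq> R \<union> C" using B_eq by (auto simp: W''_def W'_def)
  have cQ: "c \<notin> set Q" using Q(2) c by (auto simp: W''_def W'_def)
  obtain p' where p': "simple_path E i out p'" "\<forall>x\<in>set p'. x \<in> R \<union> C \<longrightarrow> x \<in> set Q"
    using splice_B[OF i p Q(1)] Q(2) W''B by blast
  have "c \<in> set p'" using c(1) i p'(1) unfolding abs_super_simple_def by blast
  moreover have "c \<in> R \<union> C" using cD by (auto simp: D_def)
  ultimately show False using p'(2) cQ by blast
qed

lemma reach_c0_D: "x \<in> D \<Longrightarrow> (c0, x) \<in> E\<^sup>*"
proof (rule ccontr)
  assume x: "x \<in> D" "(c0, x) \<notin> E\<^sup>*"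
  define U where "U = {x \<in> D. (c0, x) \<notin> E\<^sup>*}"
  have UD: "U \<subseteq> D" by (auto simp: U_def)
  have UR: "U \<subseteq> R" and UC: "U \<subseteq> C" using UD by (auto simp: D_def)
  have finU: "finite U" using finC UC finite_subset by blast
  have "card (C - U) = card C - card U" using finU UC by (rule card_Diff_subset)
  moreover have "card U \<le> card C" using finC UC by (rule card_mono)
  ultimately have "card R \<le> card U + card (C - U)" using cardRC by linarith
  moreover have "U \<noteq> {}" using x by (auto simp: U_def)
  moreover have "c0 \<in> C - U" using c0C c0D UD by auto
  ultimately obtain j l where jl: "j \<in> U" "l \<in> C - U" "j = l \<or> (l, j) \<in> E"
    using expand[OF UR, of "C - U"] by blast
  have lj: "(l, j) \<in> E" using jl by auto
  have "(c0, l) \<in> E\<^sup>*" using jl(2) C_eq by (auto simp: U_def)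
  then have "(c0, j) \<in> E\<^sup>*" using lj by (meson rtrancl.rtrancl_into_rtrancl)
  then show False using jl(1) by (auto simp: U_def)
qed

lemma hall_block:
  assumes a: "a \<in> R" and l: "l \<in> C" and Zal: "Z a l"
  shows "\<exists>\<sigma>. bij_betw \<sigma> R C \<and> (\<forall>x\<in>R. Z x (\<sigma> x)) \<and> \<sigma> a = l"
proof -
  have "\<exists>f. inj_on f (R - {a}) \<and> (\<forall>x\<in>R - {a}. f x \<in> C - {l} \<and> Z x (f x))"
  proof (rule hall, use finR finC in simp, use finR finC in simp, intro allI impI)
    fix X assume X: "X \<subseteq> R - {a}"
    define Nx where "Nx = {y \<in> C. \<exists>x\<in>X. Z x y}"
    have finX: "finite X" using X finR finite_subset by blast
    have cX: "card X \<le> card R - 1" using X finR a by (metis card_Diff_singleton card_mono finite_Diff)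
    have eq: "{y \<in> C - {l}. \<exists>x\<in>X. Z x y} = Nx - {l}" by (auto simp: Nx_def)
    have finNx: "finite Nx" using finC by (simp add: Nx_def)
    have NxC: "Nx \<subseteq> C" by (auto simp: Nx_def)
    show "card X \<le> card {y \<in> C - {l}. \<exists>x\<in>X. Z x y}"
    proof (cases "X = {}")
      case True then show ?thesis by simp
    next
      case Xne: False
      show ?thesis
      proof (cases "C - Nx = {}")
        case True
        then have "Nx = C" using NxC by auto
        then have "card (Nx - {l}) = card C - 1" using l finC by simp
        then show ?thesis using eq cX cardRC by simp
      next
        case False
        have h: "\<forall>S T. S \<subseteq> R \<longrightarrow> T \<subseteq> C \<longrightarrow> S \<noteq> {} \<longrightarrow> T \<noteq> {} \<longrightarrow> card R \<le> card S + card T \<longrightarrow>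
          (\<exists>j\<in>S. \<exists>l\<in>T. Z j l)" using FI unfolding fully_indecomposable_def by blast
        have "\<not> (\<exists>j\<in>X. \<exists>l'\<in>C - Nx. Z j l')" by (auto simp: Nx_def)
        then have "\<not> card R \<le> card X + card (C - Nx)" using h[rule_format, of X "C - Nx"] X Xne False by auto
        moreover have "card (C - Nx) = card C - card Nx" using finNx NxC by (rule card_Diff_subset)
        moreover have "card Nx \<le> card C" using finC NxC by (rule card_mono)
        ultimately have "card X < card Nx" using cardRC by linarith
        moreover have "card (Nx - {l}) \<ge> card Nx - 1" using finNx by (simp add: card_Diff_singleton_if)
        ultimately show ?thesis using eq by simp
      qed
    qed
  qed
  then obtain f where f: "inj_on f (R - {a})" "\<forall>x\<in>R - {a}. f x \<in> C - {l} \<and> Z x (f x)" by blast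
  define \<sigma> where "\<sigma> = f(a := l)"
  have inj: "inj_on \<sigma> R" unfolding inj_on_def
  proof (intro ballI impI)
    fix x y assume xy: "x \<in> R" "y \<in> R" "\<sigma> x = \<sigma> y"
    show "x = y"
    proof (cases "x = a"; cases "y = a")
      assume "x \<noteq> a" "y \<noteq> a" then show ?thesis using xy f(1) unfolding \<sigma>_def inj_on_def by auto
    next
      assume "x = a" "y \<noteq> a" then show ?thesis using xy f(2) unfolding \<sigma>_def by auto
    next
      assume "x \<noteq> a" "y = a" then show ?thesis using xy f(2) unfolding \<sigma>_def by auto
    qed simp
  qed
  have img: "\<sigma> ` R \<subseteq> C" using f(2) l by (auto simp: \<sigma>_def)
  have "card (\<sigma> ` R) = card C" using card_image[OF inj] cardRC by simp
  then have "\<sigma> ` R = C" using img finC by (simp add: card_subset_eq)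
  then have "bij_betw \<sigma> R C" using inj by (simp add: bij_betw_def)
  moreover have "\<forall>x\<in>R. Z x (\<sigma> x)" using f(2) Zal by (auto simp: \<sigma>_def)
  ultimately show ?thesis by (intro exI[of _ \<sigma>]) (simp add: \<sigma>_def)
qed

end

context blk begin

lemma D_in_L':
  assumes dD: "d \<in> D"
  shows "d \<in> L'c"
proof (cases "\<exists>i\<in>Ins. simple_node E i out d")
  case True
  then obtain i0 p0 where ip: "i0 \<in> Ins" "simple_path E i0 out p0" "d \<in> set p0" unfolding simple_node_def by blast
  have "d \<in> R \<union> C" using dD by (auto simp: D_def)
  then have "d \<in> Lc" using B_simple(2)[OF ip] by blast
  then show ?thesis unfolding L'_set_def by blast
next
  case False
  define Ns where "Ns = {x \<in> D. \<not> (\<exists>i\<in>Ins. simple_node E i out x)}"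
  have dN: "d \<in> Ns" using dD False by (simp add: Ns_def)
  have NsD: "Ns \<subseteq> D" by (auto simp: Ns_def)
  define A where "A = {x \<in> Ns. (d, x) \<in> (E \<inter> Ns \<times> Ns)\<^sup>* \<and> (x, d) \<in> (E \<inter> Ns \<times> Ns)\<^sup>*}"
  have dA: "d \<in> A" using dN by (simp add: A_def)
  have AN: "A \<subseteq> Ns" by (auto simp: A_def)
  have AR: "A \<subseteq> R" and AC: "A \<subseteq> C" using AN NsD by (auto simp: D_def)
  have finA: "finite A" using finC AC finite_subset by blast
  have "card (C - A) = card C - card A" using finA AC by (rule card_Diff_subset)
  moreover have "card A \<le> card C" using finC AC by (rule card_mono)
  ultimately have cc: "card R \<le> card A + card (C - A)" using cardRC by linarith
  have c0CA: "c0 \<in> C - A" using c0C c0D AN NsD by auto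
  obtain a l where al: "a \<in> A" "l \<in> C - A" "a = l \<or> (l, a) \<in> E"
    using expand[OF AR, of "C - A"] cc dA c0CA by blast
  have la: "(l, a) \<in> E" using al by auto
  have lout: "l \<noteq> out" using al(2) out_nC by auto
  have aR: "a \<in> R" and aD: "a \<in> D" and aN: "a \<in> Ns" using al(1) AR AN NsD by auto
  have Zal: "Z a l" using Z_edge[OF lout la] .
  obtain \<sigma> where \<sigma>: "bij_betw \<sigma> R C" "\<forall>x\<in>R. Z x (\<sigma> x)" "\<sigma> a = l"
    using hall_block[OF aR _ Zal] al(2) by blast
  have \<sigma>C: "\<sigma> x \<in> C" if "x \<in> R" for x using \<sigma>(1) that by (rule bij_betw_apply)
  have \<sigma>inj: "inj_on \<sigma> R" using \<sigma>(1) by (rule bij_betw_imp_inj_on)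
  define \<tau> where "\<tau> x = (if x = c0 then r0 else if x \<in> R then \<sigma> x else x)" for x
  have \<tau>c0: "\<tau> c0 = r0" by (simp add: \<tau>_def)
  have \<tau>R: "x \<in> R \<Longrightarrow> \<tau> x = \<sigma> x" for x using c0R by (auto simp: \<tau>_def)
  have \<tau>B: "\<tau> x \<in> R \<union> C" if "x \<in> R \<union> C" for x
    using that \<sigma>C r0R by (auto simp: \<tau>_def)
  have inj\<tau>: "inj \<tau>"
  proof (rule injI)
    fix x y assume xy: "\<tau> x = \<tau> y"
    have C_R: "z \<in> C \<Longrightarrow> z \<notin> R \<Longrightarrow> z = c0" for z using CmR by auto
    show "x = y"
    proof (cases "x = c0")
      case True
      show ?thesis
      proof (rule ccontr)
        assume "x \<noteq> y"
        then have "y \<noteq> c0" using True by simp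
        then have ty: "\<tau> y = r0" using xy True \<tau>c0 by simp
        show False
        proof (cases "y \<in> R")
          case True then have "\<sigma> y = r0" using ty \<tau>R by simp
          then show False using \<sigma>C[OF True] r0C by simp
        next
          case False then have "\<tau> y = y" using \<open>y \<noteq> c0\<close> by (simp add: \<tau>_def)
          then show False using ty False r0R by simp
        qed
      qed
    next
      case xc: False
      show ?thesis
      proof (cases "y = c0")
        case True
        then have tx: "\<tau> x = r0" using xy \<tau>c0 by simp
        show ?thesis
        proof (cases "x \<in> R")
          case True then have "\<sigma> x = r0" using tx \<tau>R by simp
          then show ?thesis using \<sigma>C[OF True] r0C by simp
        next
          case False then have "\<tau> x = x" using xc by (simp add: \<tau>_def)
          then show ?thesis using tx False r0R by simp
        qed
      next
        case yc: False
        show ?thesis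
        proof (cases "x \<in> R"; cases "y \<in> R")
          assume "x \<in> R" "y \<in> R" then show ?thesis using xy \<sigma>inj \<tau>R by (auto simp: inj_on_def)
        next
          assume "x \<notin> R" "y \<notin> R" then show ?thesis using xy xc yc by (simp add: \<tau>_def)
        next
          assume a1: "x \<in> R" "y \<notin> R"
          then have "\<sigma> x = y" using xy yc \<tau>R by (simp add: \<tau>_def)
          then show ?thesis using \<sigma>C[OF a1(1)] a1(2) C_R yc by auto
        next
          assume a1: "x \<notin> R" "y \<in> R"
          then have "\<sigma> y = x" using xy xc \<tau>R by (simp add: \<tau>_def)
          then show ?thesis using \<sigma>C[OF a1(2)] a1(1) C_R xc by auto
        qed
      qed
    qed
  qed
  have \<tau>nB: "(\<tau> ^^ n) x \<in> R \<union> C" if "x \<in> R \<union> C" for x n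
  proof (induction n)
    case 0 then show ?case using that by simp
  next
    case (Suc n) then show ?case using \<tau>B[of "(\<tau> ^^ n) x"] by simp
  qed
  have fin_orb: "finite {y. \<exists>n. y = (\<tau> ^^ n) x}" if "x \<in> R \<union> C" for x
  proof -
    have "{y. \<exists>n. y = (\<tau> ^^ n) x} \<subseteq> R \<union> C" using \<tau>nB[OF that] by auto
    then show ?thesis using finR finC finite_subset by blast
  qed
  have edge\<tau>: "\<tau> x = x \<or> (\<tau> x, x) \<in> E" if "x \<in> R" for x
  proof -
    have "Z x (\<sigma> x)" using \<sigma>(2) that by blast
    moreover have "\<sigma> x \<noteq> out" using \<sigma>C[OF that] out_nC by auto
    ultimately have "\<sigma> x = x \<or> (\<sigma> x, x) \<in> E"
      using Z_E[of x "\<sigma> x"] by (cases "\<sigma> x = x") auto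
    then show ?thesis using \<tau>R[OF that] by simp
  qed
  have c0B: "c0 \<in> R \<union> C" using c0C by blast
  have exP: "\<exists>n. 0 < n \<and> (\<tau> ^^ n) c0 = c0"
    using funpow_inj_finite[OF inj\<tau> fin_orb[OF c0B]] by blast
  define P0 where "P0 = (LEAST n. 0 < n \<and> (\<tau> ^^ n) c0 = c0)"
  have P0: "0 < P0" "(\<tau> ^^ P0) c0 = c0" using LeastI_ex[OF exP] unfolding P0_def by auto
  have P0min: "(\<tau> ^^ j) c0 \<noteq> c0" if "0 < j" "j < P0" for j
    using not_less_Least[of j "\<lambda>n. 0 < n \<and> (\<tau> ^^ n) c0 = c0"] that unfolding P0_def by auto
  have P0_1: "P0 \<noteq> 1" using P0(2) \<tau>c0 c0r0 by auto
  define Ql where "Ql = map (\<lambda>j. (\<tau> ^^ (P0 - j)) c0) [0..<P0]"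
  have lenQ: "length Ql = P0" by (simp add: Ql_def)
  have nthQ: "Ql ! j = (\<tau> ^^ (P0 - j)) c0" if "j < P0" for j using that by (simp add: Ql_def)
  have orb_ne: "(\<tau> ^^ e1) c0 \<noteq> (\<tau> ^^ e2) c0" if "e2 < e1" "e1 \<le> P0" "1 \<le> e2" for e1 e2
  proof
    assume eq: "(\<tau> ^^ e1) c0 = (\<tau> ^^ e2) c0"
    have "(\<tau> ^^ e1) c0 = (\<tau> ^^ e2) ((\<tau> ^^ (e1 - e2)) c0)"
      using that by (metis comp_apply funpow_add le_add_diff_inverse less_imp_le)
    then have "(\<tau> ^^ e2) ((\<tau> ^^ (e1 - e2)) c0) = (\<tau> ^^ e2) c0" using eq by simp
    then have "(\<tau> ^^ (e1 - e2)) c0 = c0" using inj_fn[OF inj\<tau>, of e2] by (simp add: inj_eq)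
    then show False using P0min[of "e1 - e2"] that by auto
  qed
  have distQ: "distinct Ql"
    unfolding distinct_conv_nth lenQ
  proof (intro allI impI)
    fix j k assume jk: "j < P0" "k < P0" "j \<noteq> k"
    show "Ql ! j \<noteq> Ql ! k"
    proof (cases "j < k")
      case True
      then have "P0 - k < P0 - j" "P0 - j \<le> P0" "1 \<le> P0 - k" using jk by arith+
      from orb_ne[OF this] show ?thesis using nthQ[of j] nthQ[of k] jk by simp
    next
      case False then have "k < j" using jk by simp
      then have "P0 - j < P0 - k" "P0 - k \<le> P0" "1 \<le> P0 - j" using jk by arith+
      from orb_ne[OF this] show ?thesis using nthQ[of j] nthQ[of k] jk by simp
    qed
  qed
  have QB: "set Ql \<subseteq> R \<union> C" using \<tau>nB[OF c0B] by (auto simp: Ql_def)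
  have hdQ: "hd Ql = c0"
  proof -
    have "Ql \<noteq> []" using P0 lenQ by auto
    then have "hd Ql = Ql ! 0" by (rule hd_conv_nth)
    then show ?thesis using P0 nthQ[of 0] by simp
  qed
  have lastQ: "last Ql = r0"
  proof -
    have "Ql \<noteq> []" using P0 lenQ by auto
    then have "last Ql = Ql ! (length Ql - 1)" by (rule last_conv_nth)
    then have "last Ql = Ql ! (P0 - 1)" using lenQ by simp
    also have "\<dots> = (\<tau> ^^ 1) c0" using nthQ[of "P0 - 1"] P0 by simp
    finally show ?thesis using \<tau>c0 by simp
  qed
  have edgeQ: "(Ql ! j, Ql ! Suc j) \<in> E" if "Suc j < P0" for j
  proof -
    define e where "e = P0 - Suc j"
    have e: "0 < e" "e < P0" "P0 - j = Suc e" using that by (auto simp: e_def)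
    define x where "x = (\<tau> ^^ e) c0"
    have xc0: "x \<noteq> c0" using P0min e by (simp add: x_def)
    have xR: "x \<in> R" using \<tau>nB[OF c0B, of e] xc0 C_eq R_eq by (auto simp: x_def)
    have q1: "Ql ! j = \<tau> x" using nthQ[of j] that e by (simp add: x_def)
    have q2: "Ql ! Suc j = x" using nthQ[of "Suc j"] that by (simp add: x_def e_def)
    have "\<tau> x \<noteq> x"
    proof
      assume "\<tau> x = x"
      then have "(\<tau> ^^ e) (\<tau> c0) = (\<tau> ^^ e) c0" by (simp add: x_def funpow_swap1)
      then have "\<tau> c0 = c0" using inj_fn[OF inj\<tau>, of e] by (simp add: inj_eq)
      then show False using \<tau>c0 c0r0 by simp
    qed
    then show ?thesis using edge\<tau>[OF xR] q1 q2 by auto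
  qed
  have spQ: "simple_path E c0 r0 Ql"
    unfolding simple_path_def using P0 lenQ hdQ lastQ distQ edgeQ by auto
  have c0Q: "c0 \<in> set Ql" and r0Q: "r0 \<in> set Ql" using hdQ lastQ P0 lenQ
    by (metis hd_in_set length_0_conv less_not_refl, metis last_in_set length_0_conv less_not_refl)
  have orb_mod: "(\<tau> ^^ n) c0 = (\<tau> ^^ (n mod P0)) c0" for n
  proof (induction n rule: less_induct)
    case (less n)
    show ?case
    proof (cases "n < P0")
      case True then show ?thesis by simp
    next
      case False
      then have "(\<tau> ^^ n) c0 = (\<tau> ^^ (n - P0)) ((\<tau> ^^ P0) c0)"
        by (metis comp_apply funpow_add le_add_diff_inverse2 not_less)
      also have "\<dots> = (\<tau> ^^ (n - P0)) c0" using P0 by simp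
      also have "\<dots> = (\<tau> ^^ ((n - P0) mod P0)) c0" using less.IH[of "n - P0"] P0 False by auto
      also have "(n - P0) mod P0 = n mod P0" using False by (simp add: le_mod_geq not_less)
      finally show ?thesis .
    qed
  qed
  have orbQ: "(\<tau> ^^ n) c0 \<in> set Ql" for n
  proof (cases "n mod P0 = 0")
    case True then show ?thesis using orb_mod[of n] c0Q by simp
  next
    case False
    have "n mod P0 < P0" using P0 by simp
    then have "Ql ! (P0 - n mod P0) = (\<tau> ^^ (n mod P0)) c0" using nthQ[of "P0 - n mod P0"] False by simp
    moreover have "P0 - n mod P0 < length Ql" using False lenQ P0(1) by linarith
    ultimately show ?thesis using orb_mod[of n] by (metis nth_mem)
  qed
  obtain i0 where i0: "i0 \<in> Ins" using Ins_ne by blast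
  obtain p0 where p0: "simple_path E i0 out p0" using paths_exist[OF i0] by blast
  obtain p' where p': "simple_path E i0 out p'" "set Ql \<subseteq> set p'" "\<forall>x\<in>set p'. x \<in> R \<union> C \<longrightarrow> x \<in> set Ql"
    using splice_B[OF i0 p0 spQ QB] by blast
  have NsQ: "x \<notin> set Ql" if "x \<in> Ns" for x
  proof
    assume "x \<in> set Ql"
    then have "simple_node E i0 out x" using p' unfolding simple_node_def by blast
    then show False using that i0 by (auto simp: Ns_def)
  qed
  have aQ: "a \<notin> set Ql" using NsQ aN by blast
  have aB: "a \<in> R \<union> C" using aR by blast
  obtain M where M: "0 < M" "(\<tau> ^^ M) a = a"
    using funpow_inj_finite[OF inj\<tau> fin_orb[OF aB]] by blast
  have aMk: "(\<tau> ^^ (M * k)) a = a" for k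
  proof (induction k)
    case 0 then show ?case by simp
  next
    case (Suc k)
    have "(\<tau> ^^ (M * Suc k)) a = (\<tau> ^^ M) ((\<tau> ^^ (M * k)) a)" by (simp add: funpow_add)
    then show ?case using Suc M by simp
  qed
  have orb_a: "(\<tau> ^^ n) a \<notin> set Ql" for n
  proof
    assume "(\<tau> ^^ n) a \<in> set Ql"
    then obtain j where j: "j < P0" "(\<tau> ^^ n) a = (\<tau> ^^ (P0 - j)) c0"
      using lenQ nthQ by (metis in_set_conv_nth)
    have "M * n = (M * n - n) + n" using M(1) by (simp add: le_add_diff_inverse2 mult_le_mono1 Suc_leI)
    then have "a = (\<tau> ^^ (M * n - n)) ((\<tau> ^^ n) a)" using aMk[of n] by (metis comp_apply funpow_add)
    also have "\<dots> = (\<tau> ^^ (M * n - n)) ((\<tau> ^^ (P0 - j)) c0)" using j by simp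
    also have "\<dots> = (\<tau> ^^ (M * n - n + (P0 - j))) c0" by (simp only: funpow_add comp_apply)
    finally have "a \<in> set Ql" using orbQ by simp
    then show False using aQ by simp
  qed
  define y where "y k = (\<tau> ^^ k) a" for k
  have yD: "y k \<in> D" for k
  proof -
    have "y k \<in> R \<union> C" using \<tau>nB[OF aB] by (simp add: y_def)
    moreover have "y k \<noteq> c0" "y k \<noteq> r0" using orb_a[of k] c0Q r0Q by (auto simp: y_def)
    ultimately show ?thesis using B_eq by auto
  qed
  have yQ: "y k \<notin> set Ql" for k using orb_a by (simp add: y_def)
  have ySuc: "y (Suc k) = \<tau> (y k)" for k by (simp add: y_def)
  have y_reach: "(\<forall>j. n \<le> j \<and> j \<le> n + k \<longrightarrow> y j \<in> X) \<Longrightarrow> (y (n + k), y n) \<in> (E \<inter> X \<times> X)\<^sup>*" for X n k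
  proof (induction k)
    case 0 then show ?case by simp
  next
    case (Suc k)
    have ih: "(y (n + k), y n) \<in> (E \<inter> X \<times> X)\<^sup>*" using Suc by auto
    have X: "y (n + k) \<in> X" "y (n + Suc k) \<in> X" using Suc.prems by auto
    have "y (n + Suc k) = y (n + k) \<or> (y (n + Suc k), y (n + k)) \<in> E"
      using edge\<tau>[of "y (n + k)"] yD[of "n + k"] ySuc[of "n + k"] by (auto simp: D_def)
    then have "(y (n + Suc k), y (n + k)) \<in> (E \<inter> X \<times> X)\<^sup>*" using X by auto
    then show ?case using ih by (meson rtrancl_trans)
  qed
  have y0: "y 0 = a" and yM: "y M = a" using M by (auto simp: y_def)
  have y1: "y 1 = l" using \<tau>R[OF aR] \<sigma>(3) by (simp add: y_def)
  have "\<exists>j. j \<le> M \<and> y j \<notin> Ns"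
  proof (rule ccontr)
    assume "\<not> (\<exists>j. j \<le> M \<and> y j \<notin> Ns)"
    then have allN: "\<forall>j. j \<le> M \<longrightarrow> y j \<in> Ns" by blast
    have r1: "(l, a) \<in> (E \<inter> Ns \<times> Ns)\<^sup>*" using y_reach[of 0 1 Ns] allN M y0 y1 by auto
    have r2: "(a, l) \<in> (E \<inter> Ns \<times> Ns)\<^sup>*" using y_reach[of 1 "M - 1" Ns] allN M yM y1 by auto
    have "1 \<le> M" using M(1) by simp
    then have lN: "l \<in> Ns" using allN y1 by metis
    have "(d, a) \<in> (E \<inter> Ns \<times> Ns)\<^sup>*" "(a, d) \<in> (E \<inter> Ns \<times> Ns)\<^sup>*" using al(1) by (auto simp: A_def)
    then have "l \<in> A" using r1 r2 lN by (auto simp: A_def intro: rtrancl_trans)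
    then show False using al(2) by blast
  qed
  then obtain j where j: "j \<le> M" "y j \<notin> Ns" by blast
  have "\<exists>i\<in>Ins. simple_node E i out (y j)" using j yD[of j] by (auto simp: Ns_def)
  then obtain i1 p1 where ip1: "i1 \<in> Ins" "simple_path E i1 out p1" "y j \<in> set p1" unfolding simple_node_def by blast
  have yjL: "y j \<in> Lc" using B_simple(2)[OF ip1] yD[of j] by (auto simp: D_def)
  define W where "W = D - set Ql"
  have yW: "y k \<in> W" for k using yD yQ by (simp add: W_def)
  have NsW: "Ns \<subseteq> W" using NsD NsQ by (auto simp: W_def)
  define U where "U = V - set p'"
  have WU: "W \<subseteq> U" using p'(3) DV by (auto simp: W_def U_def D_def)
  have m1: "(E \<inter> Ns \<times> Ns)\<^sup>* \<subseteq> (E \<inter> U \<times> U)\<^sup>*" using NsW WU by (intro rtrancl_mono) auto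
  have m2: "(E \<inter> W \<times> W)\<^sup>* \<subseteq> (E \<inter> U \<times> U)\<^sup>*" using WU by (intro rtrancl_mono) auto
  have ad: "(a, d) \<in> (E \<inter> U \<times> U)\<^sup>*" "(d, a) \<in> (E \<inter> U \<times> U)\<^sup>*" using al(1) m1 by (auto simp: A_def)
  have "(y j, y 0) \<in> (E \<inter> W \<times> W)\<^sup>*" using y_reach[of 0 j W] yW by simp
  then have r1: "(y j, d) \<in> (E \<inter> U \<times> U)\<^sup>*" using m2 ad y0 by (meson rtrancl_trans subsetD)
  have "(y (j + (M - j)), y j) \<in> (E \<inter> W \<times> W)\<^sup>*" using y_reach[of j "M - j" W] yW by simp
  then have "(y M, y j) \<in> (E \<inter> W \<times> W)\<^sup>*" using j by simp
  then have r2: "(d, y j) \<in> (E \<inter> U \<times> U)\<^sup>*" using m2 ad yM by (meson rtrancl_trans subsetD)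
  have yjU: "y j \<in> U" and dU: "d \<in> U" using yW WU dN NsW by auto
  have cs: "cs_equiv V E p' (y j) d"
    unfolding cs_equiv_def using yjU dU r1 r2 by (simp add: U_def)
  have app: "abs_appendage E Ins out d"
    unfolding abs_appendage_def appendage_node_def
  proof (intro ballI conjI)
    fix i assume i: "i \<in> Ins"
    obtain p where p: "simple_path E i out p" using paths_exist[OF i] by blast
    have "(i, c0) \<in> E\<^sup>*" using simple_path_reach_from(1)[OF p ss_c0r0(1)[OF i p]] .
    then show "(i, d) \<in> E\<^sup>*" using reach_c0_D[OF dD] by (meson rtrancl_trans)
    show "\<not> simple_node E i out d" using False i by blast
  qed
  have dV: "d \<in> V" using dD DV by blast
  show ?thesis unfolding L'_set_def using dV app i0 p'(1) yjL cs by blast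
qed

lemma L'_eq: "L'c = R \<union> C"
proof
  show "L'c \<subseteq> R \<union> C" by (rule L'_sub)
  have "c0 \<in> L'c" "r0 \<in> L'c" using c0r0_L unfolding L'_set_def by blast+
  then show "R \<union> C \<subseteq> L'c" unfolding B_eq using D_in_L' by blast
qed

lemma adj: "adjacent_super_simple E Ins out c0 r0"
  unfolding adjacent_super_simple_def abs_super_simple_def
  using ss_c0r0 c0r0 no_mid unfolding abs_super_simple_def by blast

lemma det_eq: "detRC R C (hH E Ins out A c) = detRC R C (jac E A)"
proof -
  have "mat (card R) (card R) (\<lambda>(i, j). hH E Ins out A c (sorted_list_of_set R ! i) (sorted_list_of_set C ! j))
      = mat (card R) (card R) (\<lambda>(i, j). jac E A (sorted_list_of_set R ! i) (sorted_list_of_set C ! j))"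
  proof (rule cong_mat)
    fix i j assume "i < card R" "j < card R"
    then have "sorted_list_of_set C ! j \<in> C" using cardRC finC
      by (metis length_sorted_list_of_set nth_mem set_sorted_list_of_set)
    then have "sorted_list_of_set C ! j \<noteq> out" using out_nC by auto
    then show "(case (i, j) of (i, j) \<Rightarrow> hH E Ins out A c (sorted_list_of_set R ! i) (sorted_list_of_set C ! j))
      = (case (i, j) of (i, j) \<Rightarrow> jac E A (sorted_list_of_set R ! i) (sorted_list_of_set C ! j))"
      by (simp add: hH_def)
  qed auto
  then show ?thesis unfolding detRC_def by simp
qed

end

theorem theorem3p24:
  fixes V :: "'v::linorder set" and E :: "('v \<times> 'v) set" and Ins :: "'v set" and out :: 'v
    and q s :: nat and rb cb :: "'v \<Rightarrow> nat"
  assumes "core_network V E Ins out"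
    and "card Ins \<ge> 2"
    and "fk_decomposition V (hH_nz E Ins out) q rb cb"
    and "s < q"
    and "structural_block Ins out {v \<in> V. rb v = s} {v \<in> V. cb v = s}"
  shows "\<exists>a b. a \<in> V \<and> b \<in> V \<and> adjacent_super_simple E Ins out a b \<and>
           (\<exists>\<sigma>::real. (\<sigma> = 1 \<or> \<sigma> = -1) \<and>
              (\<forall>A c. detRC {v \<in> V. rb v = s} {v \<in> V. cb v = s} (hH E Ins out A c)
                     = \<sigma> * detRC (L'_set V E Ins out a b - {a}) (L'_set V E Ins out a b - {b}) (jac E A)))"
proof -
  interpret blk V E Ins out q s rb cb using assms by unfold_locales
  have e1: "L'_set V E Ins out c0 r0 - {c0} = R" using L'_eq R_eq C_eq c0D c0r0 c0R by auto
  have e2: "L'_set V E Ins out c0 r0 - {r0} = C" using L'_eq R_eq C_eq r0D c0r0 r0C by auto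
  show ?thesis
    apply (rule exI[of _ c0], rule exI[of _ r0])
    using c0V r0V adj det_eq e1 e2 unfolding R_def C_def by auto
qed


end
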